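(* The ``vanilla'' meta-interpreter $M_0$ preserves LD-termination: for every definite program $P$ and every atomic query $Q_0\in B^E_P$, the LD-tree of $P\cup\{Q_0\}$ is finite if and only if the LD-tree of $(M_0\cup\mathit{ce}(P))\cup\{\mathit{solve}(Q_0)\}$ is finite.
   Context: Logic programs are definite; the LD-tree of $P\cup\{Q\}$ is the SLD-tree under Prolog's left-to-right selection rule. $B^E_P$ is the set of atoms of the language of $P$ modulo variance. Clause encoding: a clause body $B_1,\dots,B_n$ ($n\ge1$) is represented as the term $(B_1,(B_2,\dots,B_n))$ built with a binary functor $,/2$, and an empty body by the constant $\mathit{true}$. The clause-encoding $\mathit{ce}(P)$ is the set of facts $\mathit{clause}(H,B)$, one for each clause $H\leftarrow B$ of $P$. The symbols $,/2$, $\mathit{clause}$, $\mathit{solve}$ do not occur in the language of $P$. The ``vanilla'' meta-interpreter $M_0$ is the program $\mathit{solve}(\mathit{true}).$ $\mathit{solve}((A,B))\leftarrow \mathit{solve}(A),\mathit{solve}(B).$ $\mathit{solve}(H)\leftarrow \mathit{clause}(H,B),\mathit{solve}(B).$ *)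

theory Defs
  imports Main
begin

text \<open>Terms (and atoms, which are represented as compound terms whose head
symbol is a predicate symbol) over symbols of type 'f with variables
indexed by natural numbers.\<close>

datatype 'f trm = Var nat | Fn 'f "'f trm list"

type_synonym 'f subst = "nat \<Rightarrow> 'f trm"

fun subst_trm :: "'f subst \<Rightarrow> 'f trm \<Rightarrow> 'f trm" where
  "subst_trm \<sigma> (Var x) = \<sigma> x"
| "subst_trm \<sigma> (Fn f ts) = Fn f (map (subst_trm \<sigma>) ts)"

fun vars_trm :: "'f trm \<Rightarrow> nat set" where
  "vars_trm (Var x) = {x}"
| "vars_trm (Fn f ts) = \<Union> (set (map vars_trm ts))"

definition is_unifier :: "'f subst \<Rightarrow> 'f trm \<Rightarrow> 'f trm \<Rightarrow> bool" where
  "is_unifier \<sigma> s t \<longleftrightarrow> subst_trm \<sigma> s = subst_trm \<sigma> t"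

definition is_mgu :: "'f subst \<Rightarrow> 'f trm \<Rightarrow> 'f trm \<Rightarrow> bool" where
  "is_mgu \<sigma> s t \<longleftrightarrow> is_unifier \<sigma> s t \<and>
     (\<forall>\<tau>. is_unifier \<tau> s t \<longrightarrow> (\<exists>\<delta>. \<forall>x. \<tau> x = subst_trm \<delta> (\<sigma> x)))"

text \<open>A clause H <- B1,...,Bn is a pair (H, [B1,...,Bn]); a program is a
(finite) list of clauses; a goal is a list of atoms.\<close>

type_synonym 'f clause = "'f trm \<times> 'f trm list"

definition is_atom :: "'f trm \<Rightarrow> bool" where
  "is_atom A \<longleftrightarrow> (\<exists>p ts. A = Fn p ts)"

definition definite_program :: "'f clause list \<Rightarrow> bool" where
  "definite_program P \<longleftrightarrow> (\<forall>(H, B) \<in> set P. is_atom H \<and> (\<forall>A \<in> set B. is_atom A))"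

definition vars_goal :: "'f trm list \<Rightarrow> nat set" where
  "vars_goal G = \<Union> (set (map vars_trm G))"

definition rename_clause :: "(nat \<Rightarrow> nat) \<Rightarrow> 'f clause \<Rightarrow> 'f clause" where
  "rename_clause \<rho> c = (subst_trm (Var \<circ> \<rho>) (fst c), map (subst_trm (Var \<circ> \<rho>)) (snd c))"

text \<open>One LD-resolution step (leftmost selection rule) from goal G using the
i-th clause of P: a variant of the clause, standardised apart from G, is
resolved with the leftmost atom via an mgu.\<close>

definition ld_step :: "'f clause list \<Rightarrow> 'f trm list \<Rightarrow> nat \<Rightarrow> 'f trm list \<Rightarrow> bool" where
  "ld_step P G i G' \<longleftrightarrow> i < length P \<and>
     (\<exists>A R \<rho> H B \<theta>. G = A # R \<and> inj \<rho> \<and> rename_clause \<rho> (P ! i) = (H, B) \<and>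
        (vars_trm H \<union> vars_goal B) \<inter> vars_goal G = {} \<and>
        is_mgu \<theta> A H \<and> G' = map (subst_trm \<theta>) (B @ R))"

inductive ld_path :: "'f clause list \<Rightarrow> 'f trm list \<Rightarrow> nat list \<Rightarrow> 'f trm list \<Rightarrow> bool"
  for P where
  Nil: "ld_path P G [] G"
| Cons: "ld_step P G i G1 \<Longrightarrow> ld_path P G1 is G' \<Longrightarrow> ld_path P G (i # is) G'"

text \<open>The nodes of the LD-tree of P \<union> {G} are identified with the sequences of
clause choices (branch addresses) along which an LD-derivation from G exists;
the LD-tree is finite iff it has finitely many nodes.\<close>

definition ld_tree_nodes :: "'f clause list \<Rightarrow> 'f trm list \<Rightarrow> nat list set" where
  "ld_tree_nodes P G = {is. \<exists>G'. ld_path P G is G'}"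

definition ld_tree_finite :: "'f clause list \<Rightarrow> 'f trm list \<Rightarrow> bool" where
  "ld_tree_finite P G \<longleftrightarrow> finite (ld_tree_nodes P G)"

text \<open>Symbols of the meta-level language: those of P plus the fresh symbols
true, ','/2, clause/2, solve/1, which do not occur in the language of P.\<close>

datatype 'f msym = Orig 'f | TrueS | CommaS | ClauseS | SolveS

definition lift :: "'f trm \<Rightarrow> 'f msym trm" where
  "lift t = map_trm Orig t"

fun encode_body :: "'f msym trm list \<Rightarrow> 'f msym trm" where
  "encode_body [] = Fn TrueS []"
| "encode_body [B] = B"
| "encode_body (B # Bs) = Fn CommaS [B, encode_body Bs]"

definition ce :: "'f clause list \<Rightarrow> 'f msym clause list" where
  "ce P = map (\<lambda>(H, B). (Fn ClauseS [lift H, encode_body (map lift B)], [])) P"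

definition solve :: "'f msym trm \<Rightarrow> 'f msym trm" where
  "solve t = Fn SolveS [t]"

definition M0 :: "'f msym clause list" where
  "M0 = [ (solve (Fn TrueS []), []),
          (solve (Fn CommaS [Var 0, Var 1]), [solve (Var 0), solve (Var 1)]),
          (solve (Var 0), [Fn ClauseS [Var 0, Var 1], solve (Var 1)]) ]"

end

theory Submission
  imports Defs
begin


lemma subst_comp: "subst_trm \<sigma> (subst_trm \<tau> t) = subst_trm (\<lambda>x. subst_trm \<sigma> (\<tau> x)) t"
  by (induction t) auto

lemma subst_cong: "(\<And>x. x \<in> vars_trm t \<Longrightarrow> \<sigma> x = \<tau> x) \<Longrightarrow> subst_trm \<sigma> t = subst_trm \<tau> t"
  by (induction t) auto

lemma subst_Var[simp]: "subst_trm Var t = t"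
  by (induction t) (auto simp: map_idI)

lemma finite_vars[simp]: "finite (vars_trm t)"
  by (induction t) auto

lemma vars_subst: "vars_trm (subst_trm \<sigma> t) = (\<Union>x\<in>vars_trm t. vars_trm (\<sigma> x))"
  by (induction t) auto

lemma vars_ren: "vars_trm (subst_trm (Var \<circ> \<pi>) t) = \<pi> ` vars_trm t"
  by (induction t) auto

lemma vars_goal_simps[simp]: "vars_goal [] = {}" "vars_goal (A # G) = vars_trm A \<union> vars_goal G"
  "vars_goal (G @ G') = vars_goal G \<union> vars_goal G'"
  by (auto simp: vars_goal_def)

lemma finite_vars_goal[simp]: "finite (vars_goal G)"
  by (induction G) auto

lemma vars_goal_map_subst: "vars_goal (map (subst_trm \<sigma>) G) = (\<Union>x\<in>vars_goal G. vars_trm (\<sigma> x))"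
  by (induction G) (auto simp: vars_subst)

lemma map_subst_cong: "(\<And>x. x \<in> vars_goal G \<Longrightarrow> \<sigma> x = \<tau> x) \<Longrightarrow> map (subst_trm \<sigma>) G = map (subst_trm \<tau>) G"
  by (induction G) (auto intro: subst_cong)

lemma subst_Fn_neq_Var: "subst_trm \<sigma> t = Var x \<Longrightarrow> \<exists>y. t = Var y"
  by (cases t) auto

lemma is_atom_subst: "is_atom A \<Longrightarrow> is_atom (subst_trm \<sigma> A)"
  by (auto simp: is_atom_def)

lemma lift_simps[simp]: "lift (Var x) = Var x" "lift (Fn f ts) = Fn (Orig f) (map lift ts)"
  by (auto simp: lift_def)

lemma vars_lift[simp]: "vars_trm (lift t) = vars_trm t"
  by (induction t) auto

lemma lift_subst: "lift (subst_trm \<sigma> t) = subst_trm (lift \<circ> \<sigma>) (lift t)"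
  by (induction t) auto

lemma lift_ren: "lift (subst_trm (Var \<circ> \<pi>) t) = subst_trm (Var \<circ> \<pi>) (lift t)"
  by (induction t) auto

lemma lift_inj: "lift s = lift t \<Longrightarrow> s = t"
  unfolding lift_def by (metis trm.inj_map_strong msym.inject)

definition ul :: "'f msym \<Rightarrow> 'f" where
  "ul s = (case s of Orig f \<Rightarrow> f | _ \<Rightarrow> undefined)"

definition unlift :: "'f msym trm \<Rightarrow> 'f trm" where
  "unlift u = map_trm ul u"

lemma unlift_simps[simp]: "unlift (Var x) = Var x" "unlift (Fn f ts) = Fn (ul f) (map unlift ts)"
  by (auto simp: unlift_def)

lemma unlift_lift[simp]: "unlift (lift t) = t"
  by (induction t) (auto simp: ul_def map_idI)

lemma unlift_subst: "unlift (subst_trm \<sigma> u) = subst_trm (unlift \<circ> \<sigma>) (unlift u)"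
  by (induction u) auto

fun allO :: "'f msym trm \<Rightarrow> bool" where
  "allO (Var x) = True"
| "allO (Fn f ts) = ((\<exists>g. f = Orig g) \<and> (\<forall>t\<in>set ts. allO t))"

lemma allO_lift_unlift: "allO u \<Longrightarrow> lift (unlift u) = u"
  by (induction u) (auto simp: ul_def map_idI)

lemma allO_lift[simp]: "allO (lift t)"
  by (induction t) auto

lemma allO_subst_inv: "allO (subst_trm \<delta> u) \<Longrightarrow> allO u"
  by (induction u) auto

lemma subst_lift_allO: "(\<And>x. x \<in> vars_trm t \<Longrightarrow> allO (\<sigma> x)) \<Longrightarrow>
   subst_trm \<sigma> (lift t) = lift (subst_trm (unlift \<circ> \<sigma>) t)"
  by (induction t) (auto simp: allO_lift_unlift)

lemma subst_lift_lift: "subst_trm (lift \<circ> \<sigma>) (lift t) = lift (subst_trm \<sigma> t)"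
  by (simp add: lift_subst)

fun subterms :: "'a trm \<Rightarrow> 'a trm set" where
  "subterms (Var x) = {Var x}"
| "subterms (Fn f ts) = insert (Fn f ts) (\<Union> (set (map subterms ts)))"

lemma finite_subterms[simp]: "finite (subterms t)"
  by (induction t) auto

lemma self_subterms: "t \<in> subterms t"
  by (cases t) auto

lemma vars_subterms_arg: "t \<in> set ts \<Longrightarrow> subterms t \<subseteq> subterms (Fn f ts)"
  by auto



abbreviation ren :: "(nat \<Rightarrow> nat) \<Rightarrow> 'f trm \<Rightarrow> 'f trm" where
  "ren \<pi> t \<equiv> subst_trm (Var \<circ> \<pi>) t"

lemma mgu_canonical:
  assumes "is_unifier \<sigma> s t"
    and "\<And>\<tau> x. is_unifier \<tau> s t \<Longrightarrow> \<tau> x = subst_trm \<tau> (\<sigma> x)"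
  shows "is_mgu \<sigma> s t"
  using assms unfolding is_mgu_def by blast

lemma mgu_conj:
  assumes "bij \<kappa>" "is_mgu \<theta> s t"
  shows "is_mgu (\<lambda>y. ren \<kappa> (\<theta> (inv \<kappa> y))) (ren \<kappa> s) (ren \<kappa> t)"
proof -
  let ?\<sigma> = "\<lambda>y. ren \<kappa> (\<theta> (inv \<kappa> y))"
  have inv: "inv \<kappa> (\<kappa> x) = x" for x using assms(1) by (simp add: bij_is_inj)
  have sr: "subst_trm ?\<sigma> (ren \<kappa> u) = ren \<kappa> (subst_trm \<theta> u)" for u
    by (simp add: subst_comp inv o_def)
  have u: "is_unifier ?\<sigma> (ren \<kappa> s) (ren \<kappa> t)"
    using assms(2) by (simp add: sr is_unifier_def is_mgu_def)
  show ?thesis unfolding is_mgu_def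
  proof (intro conjI u allI impI)
    fix \<tau> assume "is_unifier \<tau> (ren \<kappa> s) (ren \<kappa> t)"
    hence "is_unifier (\<tau> \<circ> \<kappa>) s t" by (simp add: is_unifier_def subst_comp o_def)
    then obtain \<delta> where d: "\<And>x. \<tau> (\<kappa> x) = subst_trm \<delta> (\<theta> x)"
      using assms(2) unfolding is_mgu_def by auto
    have "\<tau> y = subst_trm (\<delta> \<circ> inv \<kappa>) (?\<sigma> y)" for y
    proof -
      have "\<tau> y = \<tau> (\<kappa> (inv \<kappa> y))" using assms(1) by (simp add: bij_is_surj surj_f_inv_f)
      also have "\<dots> = subst_trm \<delta> (\<theta> (inv \<kappa> y))" by (rule d)
      also have "\<dots> = subst_trm (\<delta> \<circ> inv \<kappa>) (?\<sigma> y)" by (simp add: subst_comp inv o_def)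
      finally show ?thesis .
    qed
    then show "\<exists>\<delta>. \<forall>x. \<tau> x = subst_trm \<delta> (?\<sigma> x)" by blast
  qed
qed

lemma bounded_vars: "finite V \<Longrightarrow> \<exists>N. \<forall>y\<in>V. y < (N::nat)"
  using finite_nat_set_iff_bounded by auto

lemma mgu_local_global:
  assumes u: "is_unifier \<sigma> s t" and fW: "finite W" and sub: "vars_trm s \<union> vars_trm t \<subseteq> W"
    and loc: "\<And>\<tau>. is_unifier \<tau> s t \<Longrightarrow> \<exists>\<delta>. \<forall>x\<in>W. \<tau> x = subst_trm \<delta> (\<sigma> x)"
  shows "\<exists>\<sigma>'. is_mgu \<sigma>' s t \<and> (\<forall>x\<in>W. \<sigma>' x = \<sigma> x)"
proof -
  have "finite (\<Union>x\<in>W. vars_trm (\<sigma> x))" using fW by simp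
  then obtain N where N0: "\<forall>y\<in>(\<Union>x\<in>W. vars_trm (\<sigma> x)). y < N"
    using bounded_vars by blast
  have N: "y < N" if "x \<in> W" "y \<in> vars_trm (\<sigma> x)" for x y
    using N0 that by blast
  define \<sigma>' where "\<sigma>' x = (if x \<in> W then \<sigma> x else Var (N + x))" for x
  have eqs: "subst_trm \<sigma>' s = subst_trm \<sigma> s" "subst_trm \<sigma>' t = subst_trm \<sigma> t"
    by (rule subst_cong, use sub in \<open>force simp: \<sigma>'_def\<close>)+
  have u': "is_unifier \<sigma>' s t" using u eqs by (simp add: is_unifier_def)
  have "is_mgu \<sigma>' s t" unfolding is_mgu_def
  proof (intro conjI u' allI impI)
    fix \<tau> assume "is_unifier \<tau> s t"
    then obtain \<delta> where d: "\<forall>x\<in>W. \<tau> x = subst_trm \<delta> (\<sigma> x)" using loc by blast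
    define \<delta>' where "\<delta>' y = (if y < N then \<delta> y else \<tau> (y - N))" for y
    have "\<tau> x = subst_trm \<delta>' (\<sigma>' x)" for x
    proof (cases "x \<in> W")
      case True
      have "subst_trm \<delta>' (\<sigma> x) = subst_trm \<delta> (\<sigma> x)"
        by (rule subst_cong) (simp add: \<delta>'_def N[OF True])
      then show ?thesis using True d by (simp add: \<sigma>'_def)
    next
      case False then show ?thesis by (simp add: \<sigma>'_def \<delta>'_def)
    qed
    then show "\<exists>\<delta>. \<forall>x. \<tau> x = subst_trm \<delta> (\<sigma>' x)" by blast
  qed
  moreover have "\<forall>x\<in>W. \<sigma>' x = \<sigma> x" by (simp add: \<sigma>'_def)
  ultimately show ?thesis by blast
qed

lemma subst_subst_id_var:
  assumes "subst_trm \<delta>' (subst_trm \<delta> u) = u" "y \<in> vars_trm u"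
  shows "\<exists>z. \<delta> y = Var z \<and> \<delta>' z = Var y"
  using assms
proof (induction u)
  case (Var x)
  then show ?case by (cases "\<delta> x") auto
next
  case (Fn f ts)
  then obtain t where t: "t \<in> set ts" "y \<in> vars_trm t" by auto
  from Fn.prems(1) have "map (subst_trm \<delta>' \<circ> subst_trm \<delta>) ts = ts" by simp
  hence "subst_trm \<delta>' (subst_trm \<delta> t) = t" using t(1) by (metis comp_apply map_eq_conv map_ident)
  then show ?case using Fn.IH t by blast
qed

lemma mgu_renames:
  assumes "is_mgu \<theta> s t" "is_unifier \<sigma>0 s t" "\<And>x. x \<in> X \<Longrightarrow> \<sigma>0 x = Var x"
  shows "\<exists>\<pi>. (\<forall>x\<in>X. \<theta> x = Var (\<pi> x)) \<and> inj_on \<pi> X"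
proof -
  obtain \<delta> where d: "\<And>x. \<sigma>0 x = subst_trm \<delta> (\<theta> x)" using assms(1,2) unfolding is_mgu_def by blast
  have ex: "\<exists>z. \<theta> x = Var z \<and> \<delta> z = Var x" if "x \<in> X" for x
  proof -
    have "subst_trm \<delta> (\<theta> x) = Var x" using d[of x] assms(3)[OF that] by simp
    then obtain z where "\<theta> x = Var z" by (cases "\<theta> x") auto
    then show ?thesis using \<open>subst_trm \<delta> (\<theta> x) = Var x\<close> by auto
  qed
  define \<pi> where "\<pi> x = (SOME z. \<theta> x = Var z \<and> \<delta> z = Var x)" for x
  have p: "\<theta> x = Var (\<pi> x) \<and> \<delta> (\<pi> x) = Var x" if "x \<in> X" for x
    unfolding \<pi>_def using someI_ex[OF ex[OF that]] .
  have "inj_on \<pi> X"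
    by (rule inj_onI) (metis p trm.inject(1))
  then show ?thesis using p by blast
qed

lemma mgu_allO:
  assumes "is_mgu \<theta> s t" "is_unifier \<tau> s t" "allO (\<tau> x)"
  shows "allO (\<theta> x)"
proof -
  obtain \<delta> where "\<And>x. \<tau> x = subst_trm \<delta> (\<theta> x)" using assms(1,2) unfolding is_mgu_def by blast
  then show ?thesis using assms(3) allO_subst_inv by metis
qed



fun ab :: "('f msym trm \<Rightarrow> nat) \<Rightarrow> nat \<Rightarrow> 'f msym trm \<Rightarrow> 'f trm" where
  "ab c N (Var y) = Var y"
| "ab c N (Fn f ts) = (case f of Orig g \<Rightarrow> Fn g (map (ab c N) ts) | _ \<Rightarrow> Var (N + c (Fn f ts)))"

lemma ab_subst: "ab c N (subst_trm \<tau> (lift s)) = subst_trm (ab c N \<circ> \<tau>) s"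
  by (induction s) auto

lemma ab_rt:
  assumes "subterms u \<subseteq> S" "inj_on c S" "\<forall>y\<in>vars_trm u. y < N"
  shows "subst_trm (\<lambda>z. if N \<le> z \<and> z - N \<in> c ` S then inv_into S c (z - N) else Var z) (lift (ab c N u)) = u"
  using assms
proof (induction u)
  case (Var x)
  then show ?case by auto
next
  case (Fn f ts)
  show ?case
  proof (cases f)
    case (Orig g)
    have "\<forall>t\<in>set ts. subst_trm (\<lambda>z. if N \<le> z \<and> z - N \<in> c ` S then inv_into S c (z - N) else Var z) (lift (ab c N t)) = t"
    proof
      fix t assume t: "t \<in> set ts"
      show "subst_trm (\<lambda>z. if N \<le> z \<and> z - N \<in> c ` S then inv_into S c (z - N) else Var z) (lift (ab c N t)) = t"
        by (rule Fn.IH[OF t]) (use t Fn.prems in auto)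
    qed
    then show ?thesis using Orig by (simp add: map_idI)
  next
    case TrueS
    have "Fn f ts \<in> S" using Fn.prems by auto
    then show ?thesis using TrueS Fn.prems(2) by auto
  next
    case CommaS
    have "Fn f ts \<in> S" using Fn.prems by auto
    then show ?thesis using CommaS Fn.prems(2) by auto
  next
    case ClauseS
    have "Fn f ts \<in> S" using Fn.prems by auto
    then show ?thesis using ClauseS Fn.prems(2) by auto
  next
    case SolveS
    have "Fn f ts \<in> S" using Fn.prems by auto
    then show ?thesis using SolveS Fn.prems(2) by auto
  qed
qed

lemma mgu_lift_local:
  assumes mgu: "is_mgu \<theta> s t" and fW: "finite W" and un: "subst_trm \<tau> (lift s) = subst_trm \<tau> (lift t)"
  shows "\<exists>\<delta>. \<forall>x\<in>W. \<tau> x = subst_trm \<delta> (lift (\<theta> x))"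
proof -
  define S where "S = (\<Union>x\<in>W. subterms (\<tau> x))"
  have fS: "finite S" using fW by (simp add: S_def)
  obtain c :: "'a msym trm \<Rightarrow> nat" and n where c: "inj_on c S" using finite_imp_inj_to_nat_seg[OF fS] by blast
  have "finite (\<Union>x\<in>W. vars_trm (\<tau> x))" using fW by simp
  then obtain N where N0: "\<forall>y\<in>(\<Union>x\<in>W. vars_trm (\<tau> x)). y < N"
    using bounded_vars by blast
  define \<rho> where "\<rho> z = (if N \<le> z \<and> z - N \<in> c ` S then inv_into S c (z - N) else Var z)" for z
  have "is_unifier (ab c N \<circ> \<tau>) s t"
    using un unfolding is_unifier_def by (metis ab_subst)
  then obtain \<delta>s where ds: "\<And>x. ab c N (\<tau> x) = subst_trm \<delta>s (\<theta> x)"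
    using mgu unfolding is_mgu_def by (metis comp_apply)
  define \<delta> where "\<delta> y = subst_trm \<rho> (lift (\<delta>s y))" for y
  have "\<tau> x = subst_trm \<delta> (lift (\<theta> x))" if x: "x \<in> W" for x
  proof -
    have "subst_trm \<delta> (lift (\<theta> x)) = subst_trm \<rho> (lift (subst_trm \<delta>s (\<theta> x)))"
      by (simp add: lift_subst subst_comp \<delta>_def[abs_def] o_def)
    also have "\<dots> = subst_trm \<rho> (lift (ab c N (\<tau> x)))" by (simp add: ds)
    also have "\<dots> = \<tau> x" unfolding \<rho>_def
      by (rule ab_rt) (use x N0 c in \<open>auto simp: S_def\<close>)
    finally show ?thesis by simp
  qed
  then show ?thesis by blast
qed

lemma inj_extend_bij:
  fixes \<pi> :: "nat \<Rightarrow> nat"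
  assumes fX: "finite X" and inj: "inj_on \<pi> X"
  shows "\<exists>\<kappa>. bij \<kappa> \<and> (\<forall>x\<in>X. \<kappa> x = \<pi> x)"
proof -
  define B where "B = \<pi> ` X"
  define C where "C = X \<union> B"
  have fB: "finite B" "finite C" using fX by (auto simp: B_def C_def)
  have cB: "card B = card X" using inj by (simp add: B_def card_image)
  have "card (C - X) = card (C - B)"
    using fB fX cB by (simp add: card_Diff_subset C_def)
  then obtain g where g: "bij_betw g (C - X) (C - B)"
    using finite_same_card_bij fB by blast
  define \<kappa> where "\<kappa> x = (if x \<in> X then \<pi> x else if x \<in> C then g x else x)" for x
  have b1: "bij_betw \<kappa> X B"
    using inj by (auto simp: bij_betw_def B_def \<kappa>_def inj_on_def image_def)
  have b2: "bij_betw \<kappa> (C - X) (C - B)"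
    using g by (rule bij_betw_cong[THEN iffD1, rotated]) (auto simp: \<kappa>_def)
  have b3: "bij_betw \<kappa> (- C) (- C)"
  proof -
    have "bij_betw id (- C) (- C)" by simp
    then show ?thesis by (rule bij_betw_cong[THEN iffD1, rotated]) (auto simp: \<kappa>_def C_def)
  qed
  have b12: "bij_betw \<kappa> (X \<union> (C - X)) (B \<union> (C - B))"
    by (rule bij_betw_combine[OF b1 b2]) auto
  have "bij_betw \<kappa> ((X \<union> (C - X)) \<union> - C) ((B \<union> (C - B)) \<union> - C)"
    by (rule bij_betw_combine[OF b12 b3]) (auto simp: C_def)
  moreover have "(X \<union> (C - X)) \<union> - C = UNIV" "(B \<union> (C - B)) \<union> - C = UNIV"
    by (auto simp: C_def)
  ultimately have "bij \<kappa>" by simp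
  then show ?thesis by (auto simp: \<kappa>_def)
qed



lemma ren_comp: "ren (\<kappa> \<circ> \<rho>) t = ren \<kappa> (ren \<rho> t)"
  by (simp add: subst_comp o_def)

lemma vars_ren'[simp]: "vars_trm (subst_trm (\<lambda>a. Var (\<pi> a)) t) = \<pi> ` vars_trm t"
  using vars_ren[of \<pi> t] by (simp add: o_def)

lemma vars_goal_ren: "vars_goal (map (ren \<pi>) G) = \<pi> ` vars_goal G"
  by (induction G) (auto simp: vars_ren)

lemma ld_step_variant:
  assumes k: "bij \<kappa>" and st: "ld_step P G i G1"
  shows "ld_step P (map (ren \<kappa>) G) i (map (ren \<kappa>) G1)"
proof -
  from st obtain A R \<rho> H B \<theta> where i: "i < length P" and G: "G = A # R" and \<rho>: "inj \<rho>"
    and rc: "rename_clause \<rho> (P ! i) = (H, B)"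
    and disj: "(vars_trm H \<union> vars_goal B) \<inter> vars_goal G = {}"
    and mgu: "is_mgu \<theta> A H" and G1: "G1 = map (subst_trm \<theta>) (B @ R)"
    unfolding ld_step_def by blast
  let ?\<sigma> = "\<lambda>y. ren \<kappa> (\<theta> (inv \<kappa> y))"
  have inj\<kappa>: "inj \<kappa>" using k bij_is_inj by blast
  have inv: "inv \<kappa> (\<kappa> x) = x" for x using inj\<kappa> by simp
  have rc': "rename_clause (\<kappa> \<circ> \<rho>) (P ! i) = (ren \<kappa> H, map (ren \<kappa>) B)"
    using rc by (auto simp: rename_clause_def ren_comp)
  have disj': "(vars_trm (ren \<kappa> H) \<union> vars_goal (map (ren \<kappa>) B)) \<inter> vars_goal (map (ren \<kappa>) G) = {}"
    using disj inj\<kappa> by (auto simp: vars_ren vars_goal_ren inj_eq)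
  have mgu': "is_mgu ?\<sigma> (ren \<kappa> A) (ren \<kappa> H)" by (rule mgu_conj[OF k mgu])
  have sr: "subst_trm ?\<sigma> (ren \<kappa> u) = ren \<kappa> (subst_trm \<theta> u)" for u
    by (simp add: subst_comp inv o_def)
  have G1': "map (ren \<kappa>) G1 = map (subst_trm ?\<sigma>) (map (ren \<kappa>) B @ map (ren \<kappa>) R)"
    by (simp add: G1 sr)
  show ?thesis unfolding ld_step_def
    using i G \<rho> inj\<kappa> rc' disj' mgu' G1'
    by (intro conjI i exI[of _ "ren \<kappa> A"] exI[of _ "map (ren \<kappa>) R"] exI[of _ "\<kappa> \<circ> \<rho>"]
        exI[of _ "ren \<kappa> H"] exI[of _ "map (ren \<kappa>) B"] exI[of _ ?\<sigma>]) (auto intro: inj_compose)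
qed

lemma ld_path_variant:
  "ld_path P G is G' \<Longrightarrow> bij \<kappa> \<Longrightarrow> ld_path P (map (ren \<kappa>) G) is (map (ren \<kappa>) G')"
proof (induction rule: ld_path.induct)
  case (Nil G)
  then show ?case by (simp add: ld_path.Nil)
next
  case (Cons G i G1 "is" G')
  then show ?case using ld_step_variant ld_path.Cons by blast
qed

lemma ld_path_variant_back:
  assumes "bij \<kappa>" "ld_path P (map (ren \<kappa>) G) is G'"
  shows "\<exists>G''. ld_path P G is G''"
proof -
  have b: "bij (inv \<kappa>)" using assms(1) by (simp add: bij_imp_bij_inv)
  have "map (ren (inv \<kappa>)) (map (ren \<kappa>) G) = G"
    using assms(1) by (simp add: subst_comp o_def bij_is_inj map_idI)
  then show ?thesis using ld_path_variant[OF assms(2) b] by metis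
qed

lemma ld_path_append:
  "ld_path P G is1 G1 \<Longrightarrow> ld_path P G1 is2 G2 \<Longrightarrow> ld_path P G (is1 @ is2) G2"
  by (induction rule: ld_path.induct) (auto intro: ld_path.Cons)

lemma ld_path_indices:
  "ld_path P G is G' \<Longrightarrow> set is \<subseteq> {..<length P}"
  by (induction rule: ld_path.induct) (auto simp: ld_step_def)

lemma finite_iff_bounded:
  "ld_tree_finite P G \<longleftrightarrow> (\<exists>d. \<forall>is G'. ld_path P G is G' \<longrightarrow> length is \<le> d)"
proof
  assume "ld_tree_finite P G"
  hence "finite (length ` ld_tree_nodes P G)" by (simp add: ld_tree_finite_def)
  then obtain d where "\<forall>n\<in>length ` ld_tree_nodes P G. n \<le> d"
    using finite_nat_set_iff_bounded_le by blast
  then show "\<exists>d. \<forall>is G'. ld_path P G is G' \<longrightarrow> length is \<le> d"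
    by (auto simp: ld_tree_nodes_def)
next
  assume "\<exists>d. \<forall>is G'. ld_path P G is G' \<longrightarrow> length is \<le> d"
  then obtain d where d: "\<And>is G'. ld_path P G is G' \<Longrightarrow> length is \<le> d" by blast
  have "ld_tree_nodes P G \<subseteq> {xs. set xs \<subseteq> {..<length P} \<and> length xs \<le> d}"
    using d ld_path_indices by (fastforce simp: ld_tree_nodes_def)
  moreover have "finite {xs. set xs \<subseteq> {..<length P} \<and> length xs \<le> d}"
    by (rule finite_lists_length_le) simp
  ultimately show "ld_tree_finite P G" by (simp add: ld_tree_finite_def finite_subset)
qed



inductive enc_rel :: "'f msym trm \<Rightarrow> 'f trm list \<Rightarrow> bool" where
  ET: "enc_rel (Fn TrueS []) []"
| EC: "enc_rel a As \<Longrightarrow> enc_rel b Bs \<Longrightarrow> enc_rel (Fn CommaS [a, b]) (As @ Bs)"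
| EA: "is_atom A \<Longrightarrow> enc_rel (lift A) [A]"

inductive gl_rel :: "'f msym trm list \<Rightarrow> 'f trm list \<Rightarrow> bool" where
  GN: "gl_rel [] []"
| GC: "enc_rel c As \<Longrightarrow> gl_rel MR R \<Longrightarrow> gl_rel (solve c # MR) (As @ R)"

fun wt :: "'f msym trm \<Rightarrow> nat" where
  "wt (Var x) = 0"
| "wt (Fn f ts) = (if f = CommaS then 1 + sum_list (map wt ts) else 1)"

fun wa :: "'f msym trm \<Rightarrow> nat" where
  "wa (Var x) = 0"
| "wa (Fn f ts) = (if f = SolveS then sum_list (map wt ts) else 0)"

definition wg :: "'f msym trm list \<Rightarrow> nat" where
  "wg MG = sum_list (map wa MG)"

lemma wg_simps[simp]: "wg [] = 0" "wg (A # MG) = wa A + wg MG" "wg (MG @ MG') = wg MG + wg MG'"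
  by (auto simp: wg_def)

lemma wa_solve[simp]: "wa (solve c) = wt c"
  by (simp add: solve_def)

lemma subst_solve[simp]: "subst_trm \<sigma> (solve c) = solve (subst_trm \<sigma> c)"
  by (simp add: solve_def)

lemma vars_solve[simp]: "vars_trm (solve c) = vars_trm c"
  by (simp add: solve_def)

lemma enc_rel_vars: "enc_rel c As \<Longrightarrow> vars_trm c = vars_goal As"
  by (induction rule: enc_rel.induct) auto

lemma gl_rel_vars: "gl_rel MG G \<Longrightarrow> vars_goal MG = vars_goal G"
  by (induction rule: gl_rel.induct) (auto simp: enc_rel_vars)

lemma enc_rel_atoms: "enc_rel c As \<Longrightarrow> \<forall>A\<in>set As. is_atom A"
  by (induction rule: enc_rel.induct) auto

lemma enc_rel_subst:
  "enc_rel c As \<Longrightarrow> (\<And>x. x \<in> vars_trm c \<Longrightarrow> allO (\<sigma> x)) \<Longrightarrow>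
   enc_rel (subst_trm \<sigma> c) (map (subst_trm (unlift \<circ> \<sigma>)) As)"
proof (induction rule: enc_rel.induct)
  case ET
  then show ?case by (simp add: enc_rel.ET)
next
  case (EC a As b Bs)
  have "enc_rel (subst_trm \<sigma> a) (map (subst_trm (unlift \<circ> \<sigma>)) As)" using EC by (auto simp: o_def)
  moreover have "enc_rel (subst_trm \<sigma> b) (map (subst_trm (unlift \<circ> \<sigma>)) Bs)" using EC by (auto simp: o_def)
  ultimately have "enc_rel (Fn CommaS [subst_trm \<sigma> a, subst_trm \<sigma> b]) (map (subst_trm (unlift \<circ> \<sigma>)) As @ map (subst_trm (unlift \<circ> \<sigma>)) Bs)"
    by (rule enc_rel.EC)
  then show ?case by (simp add: o_def)
next
  case (EA A)
  have "subst_trm \<sigma> (lift A) = lift (subst_trm (unlift \<circ> \<sigma>) A)"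
    by (rule subst_lift_allO) (use EA in auto)
  moreover have "enc_rel (lift (subst_trm (unlift \<circ> \<sigma>) A)) [subst_trm (unlift \<circ> \<sigma>) A]"
    by (rule enc_rel.EA[OF is_atom_subst[OF EA.hyps]])
  ultimately show ?case by (simp only: list.map)
qed

lemma gl_rel_subst:
  "gl_rel MG G \<Longrightarrow> (\<And>x. x \<in> vars_goal MG \<Longrightarrow> allO (\<sigma> x)) \<Longrightarrow>
   gl_rel (map (subst_trm \<sigma>) MG) (map (subst_trm (unlift \<circ> \<sigma>)) G)"
proof (induction rule: gl_rel.induct)
  case GN
  then show ?case by (simp add: gl_rel.GN)
next
  case (GC c As MR R)
  have "enc_rel (subst_trm \<sigma> c) (map (subst_trm (unlift \<circ> \<sigma>)) As)"
    using GC by (intro enc_rel_subst) auto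
  moreover have "gl_rel (map (subst_trm \<sigma>) MR) (map (subst_trm (unlift \<circ> \<sigma>)) R)"
    using GC by (auto simp: o_def)
  ultimately have "gl_rel (solve (subst_trm \<sigma> c) # map (subst_trm \<sigma>) MR) (map (subst_trm (unlift \<circ> \<sigma>)) As @ map (subst_trm (unlift \<circ> \<sigma>)) R)"
    by (rule gl_rel.GC)
  then show ?case by (simp add: o_def)
qed

lemma wt_subst: "enc_rel c As \<Longrightarrow> wt (subst_trm \<sigma> c) = wt c"
  by (induction rule: enc_rel.induct) (auto simp: is_atom_def)

lemma wg_subst: "gl_rel MG G \<Longrightarrow> wg (map (subst_trm \<sigma>) MG) = wg MG"
  by (induction rule: gl_rel.induct) (auto simp: wt_subst)

lemma subst_encode_body: "subst_trm \<sigma> (encode_body Ls) = encode_body (map (subst_trm \<sigma>) Ls)"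
  by (induction Ls rule: encode_body.induct) auto

lemma vars_encode_body: "vars_trm (encode_body Ls) = vars_goal Ls"
  by (induction Ls rule: encode_body.induct) auto

lemma enc_body_rel: "(\<forall>A\<in>set Ls. is_atom A) \<Longrightarrow> enc_rel (encode_body (map lift Ls)) Ls"
proof (induction Ls rule: induct_list012)
  case 1
  then show ?case by (simp add: enc_rel.ET)
next
  case (2 x)
  then show ?case using enc_rel.EA[of x] by simp
next
  case (3 x y zs)
  have "enc_rel (lift x) [x]" using 3 enc_rel.EA by auto
  moreover have "enc_rel (encode_body (map lift (y # zs))) (y # zs)" using 3 by auto
  ultimately have "enc_rel (Fn CommaS [lift x, encode_body (map lift (y # zs))]) ([x] @ (y # zs))"
    by (rule enc_rel.EC)
  then show ?case by simp
qed

lemma ren_lift: "subst_trm (Var \<circ> \<rho>) (lift t) = lift (ren \<rho> t)"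
  by (simp add: lift_ren)

lemma ren_lift'[simp]: "subst_trm (\<lambda>a. Var (\<rho> a)) (lift t) = lift (ren \<rho> t)"
  using lift_ren[of \<rho> t] by (simp add: o_def)

lemma rename_ce:
  assumes "k < length P" "P ! k = (Ho, Bo)"
  shows "rename_clause \<rho> (ce P ! k) =
     (Fn ClauseS [lift (ren \<rho> Ho), encode_body (map lift (map (ren \<rho>) Bo))], [])"
  using assms by (simp add: ce_def rename_clause_def subst_encode_body o_def)

lemma length_M0: "length M0 = 3"
  by (simp add: M0_def)

lemma MP_nth_M0: "j < 3 \<Longrightarrow> (M0 @ ce P) ! j = M0 ! j"
  by (simp only: nth_append length_M0) simp

lemma MP_nth_ce: "(M0 @ ce P) ! (3 + k) = ce P ! k"
  by (simp add: M0_def nth_append)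

lemma MP_length: "length (M0 @ ce P) = 3 + length P"
  by (simp add: M0_def ce_def)

lemma rename_M0_0: "rename_clause \<rho> (M0 ! 0) = (solve (Fn TrueS []), [])"
  by (simp add: M0_def rename_clause_def solve_def)

lemma rename_M0_1: "rename_clause \<rho> (M0 ! 1) =
   (solve (Fn CommaS [Var (\<rho> 0), Var (\<rho> 1)]), [solve (Var (\<rho> 0)), solve (Var (\<rho> 1))])"
  by (simp add: M0_def rename_clause_def solve_def)

lemma rename_M0_2: "rename_clause \<rho> (M0 ! 2) =
   (solve (Var (\<rho> 0)), [Fn ClauseS [Var (\<rho> 0), Var (\<rho> 1)], solve (Var (\<rho> 1))])"
  by (simp add: M0_def rename_clause_def solve_def)

definition Rm :: "'f msym trm list \<Rightarrow> 'f trm list \<Rightarrow> bool" where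
  "Rm MG G \<longleftrightarrow> gl_rel MG G \<or>
     (\<exists>A b MR R. MG = Fn ClauseS [lift A, Var b] # solve (Var b) # MR \<and> G = A # R \<and>
        gl_rel MR R \<and> is_atom A \<and> b \<notin> vars_trm A \<and> b \<notin> vars_goal MR)"



lemma ld_stepI:
  "i < length P \<Longrightarrow> inj \<rho> \<Longrightarrow> rename_clause \<rho> (P ! i) = (H, B) \<Longrightarrow>
   (vars_trm H \<union> vars_goal B) \<inter> vars_goal (A # R) = {} \<Longrightarrow> is_mgu \<theta> A H \<Longrightarrow>
   G' = map (subst_trm \<theta>) (B @ R) \<Longrightarrow> ld_step P (A # R) i G'"
  unfolding ld_step_def by blast

lemma map_subst_Var[simp]: "map (subst_trm Var) G = G"
  by (induction G) auto

lemma fresh2: "\<forall>y\<in>V. y < (N::nat) \<Longrightarrow> {N, Suc N} \<inter> V = {}"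
  by auto

lemma ld_step_path: "ld_step P G i G' \<Longrightarrow> ld_path P G [i] G'"
  by (meson ld_path.Cons ld_path.Nil)

lemma inj_shift: "inj (\<lambda>x::nat. x + N)"
  by (simp add: inj_on_def)

lemma definite_clause:
  "definite_program P \<Longrightarrow> i < length P \<Longrightarrow> P ! i = (Ho, Bo) \<Longrightarrow> is_atom Ho \<and> (\<forall>A\<in>set Bo. is_atom A)"
  unfolding definite_program_def by (metis (mono_tags, lifting) case_prodD nth_mem)

lemma step_true:
  assumes "gl_rel MR R"
  shows "ld_step (M0 @ ce P) (solve (Fn TrueS []) # MR) 0 MR"
proof (rule ld_stepI[where \<rho> = id and \<theta> = Var])
  show "0 < length (M0 @ ce P)" by (simp add: length_M0)
  show "rename_clause id ((M0 @ ce P) ! 0) = (solve (Fn TrueS []), [])"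
    by (simp add: MP_nth_M0 rename_M0_0)
  show "is_mgu Var (solve (Fn TrueS [])) (solve (Fn TrueS []))"
    by (rule mgu_canonical) (auto simp: is_unifier_def)
qed (auto simp: solve_def)

lemma step_comma:
  assumes "\<forall>y\<in>vars_goal (solve (Fn CommaS [a, b]) # MR). y < N"
  shows "ld_step (M0 @ ce P) (solve (Fn CommaS [a, b]) # MR) 1 (solve a # solve b # MR)"
proof -
  define \<sigma> where "\<sigma> = Var(N := a, Suc N := b)"
  have na: "N \<notin> vars_trm a" "Suc N \<notin> vars_trm a" "N \<notin> vars_trm b" "Suc N \<notin> vars_trm b"
  proof -
    have "\<forall>y \<in> vars_trm a \<union> vars_trm b. y < N" using assms by (simp add: solve_def)
    then show "N \<notin> vars_trm a" "Suc N \<notin> vars_trm a" "N \<notin> vars_trm b" "Suc N \<notin> vars_trm b"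
      using Suc_lessD less_not_refl by blast+
  qed
  have sa: "subst_trm \<sigma> a = a" "subst_trm \<sigma> b = b"
    by (rule trans[OF subst_cong subst_Var], use na in \<open>auto simp: \<sigma>_def\<close>)+
  have sMR: "map (subst_trm \<sigma>) MR = MR"
  proof -
    have "map (subst_trm \<sigma>) MR = map (subst_trm Var) MR"
    proof (rule map_subst_cong)
      fix x assume "x \<in> vars_goal MR"
      then have "x < N" using assms by simp
      then show "\<sigma> x = Var x" by (simp add: \<sigma>_def)
    qed
    also have "\<dots> = MR" by (induction MR) auto
    finally show ?thesis .
  qed
  show ?thesis
  proof (rule ld_stepI[where \<rho> = "\<lambda>x. x + N" and \<theta> = \<sigma>])
    show "1 < length (M0 @ ce P)" by (simp add: length_M0)
    show "inj (\<lambda>x. x + N)" by (rule inj_shift)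
    show "rename_clause (\<lambda>x. x + N) ((M0 @ ce P) ! 1) =
      (solve (Fn CommaS [Var N, Var (Suc N)]), [solve (Var N), solve (Var (Suc N))])"
      by (simp add: M0_def rename_clause_def solve_def)
    have eq: "vars_trm (solve (Fn CommaS [Var N, Var (Suc N)])) \<union> vars_goal [solve (Var N), solve (Var (Suc N))] = {N, Suc N}"
      by (auto simp: solve_def)
    show "(vars_trm (solve (Fn CommaS [Var N, Var (Suc N)])) \<union> vars_goal [solve (Var N), solve (Var (Suc N))])
      \<inter> vars_goal (solve (Fn CommaS [a, b]) # MR) = {}"
      unfolding eq by (rule fresh2[OF assms])
    show "is_mgu \<sigma> (solve (Fn CommaS [a, b])) (solve (Fn CommaS [Var N, Var (Suc N)]))"
    proof (rule mgu_canonical)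
      show "is_unifier \<sigma> (solve (Fn CommaS [a, b])) (solve (Fn CommaS [Var N, Var (Suc N)]))"
        by (simp add: is_unifier_def sa) (simp add: \<sigma>_def)
      fix \<tau> x assume "is_unifier \<tau> (solve (Fn CommaS [a, b])) (solve (Fn CommaS [Var N, Var (Suc N)]))"
      then have "\<tau> N = subst_trm \<tau> a" "\<tau> (Suc N) = subst_trm \<tau> b"
        by (auto simp: is_unifier_def solve_def)
      then show "\<tau> x = subst_trm \<tau> (\<sigma> x)" by (auto simp: \<sigma>_def)
    qed
    have s1: "\<sigma> N = a" "\<sigma> (Suc N) = b" by (simp_all add: \<sigma>_def)
    show "solve a # solve b # MR = map (subst_trm \<sigma>) ([solve (Var N), solve (Var (Suc N))] @ MR)"
      by (simp only: s1 sMR list.map append.simps subst_solve subst_trm.simps)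
  qed
qed

lemma step_solve_atom:
  assumes "\<forall>y\<in>vars_goal (solve (lift A) # MR). y < N"
  shows "ld_step (M0 @ ce P) (solve (lift A) # MR) 2 (Fn ClauseS [lift A, Var (Suc N)] # solve (Var (Suc N)) # MR)"
proof -
  define \<sigma> where "\<sigma> = Var(N := lift A)"
  have na: "N \<notin> vars_trm A" using assms by force
  have sa: "subst_trm \<sigma> (lift A) = lift A"
    by (rule trans[OF subst_cong subst_Var], use na in \<open>auto simp: \<sigma>_def\<close>)
  have sMR: "map (subst_trm \<sigma>) MR = MR"
  proof -
    have "map (subst_trm \<sigma>) MR = map (subst_trm Var) MR"
    proof (rule map_subst_cong)
      fix x assume "x \<in> vars_goal MR"
      then have "x < N" using assms by simp
      then show "\<sigma> x = Var x" by (simp add: \<sigma>_def)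
    qed
    also have "\<dots> = MR" by (induction MR) auto
    finally show ?thesis .
  qed
  show ?thesis
  proof (rule ld_stepI[where \<rho> = "\<lambda>x. x + N" and \<theta> = \<sigma>])
    show "2 < length (M0 @ ce P)" by (simp add: length_M0)
    show "inj (\<lambda>x. x + N)" by (rule inj_shift)
    show "rename_clause (\<lambda>x. x + N) ((M0 @ ce P) ! 2) =
      (solve (Var N), [Fn ClauseS [Var N, Var (Suc N)], solve (Var (Suc N))])"
      by (simp add: M0_def rename_clause_def solve_def)
    have eq: "vars_trm (solve (Var N)) \<union> vars_goal [Fn ClauseS [Var N, Var (Suc N)], solve (Var (Suc N))] = {N, Suc N}"
      by (auto simp: solve_def)
    show "(vars_trm (solve (Var N)) \<union> vars_goal [Fn ClauseS [Var N, Var (Suc N)], solve (Var (Suc N))])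
      \<inter> vars_goal (solve (lift A) # MR) = {}"
      unfolding eq by (rule fresh2[OF assms])
    show "is_mgu \<sigma> (solve (lift A)) (solve (Var N))"
    proof (rule mgu_canonical)
      show "is_unifier \<sigma> (solve (lift A)) (solve (Var N))"
        by (simp add: is_unifier_def sa) (simp add: \<sigma>_def)
      fix \<tau> x assume "is_unifier \<tau> (solve (lift A)) (solve (Var N))"
      then have "\<tau> N = subst_trm \<tau> (lift A)"
        by (auto simp: is_unifier_def solve_def)
      then show "\<tau> x = subst_trm \<tau> (\<sigma> x)" by (auto simp: \<sigma>_def)
    qed
    show "Fn ClauseS [lift A, Var (Suc N)] # solve (Var (Suc N)) # MR =
      map (subst_trm \<sigma>) ([Fn ClauseS [Var N, Var (Suc N)], solve (Var (Suc N))] @ MR)"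
    proof -
      have s1: "\<sigma> N = lift A" "\<sigma> (Suc N) = Var (Suc N)" by (simp_all add: \<sigma>_def)
      show ?thesis by (simp only: s1 sMR list.map append.simps subst_solve subst_trm.simps)
    qed
  qed
qed



lemma subst_lift_comp: "subst_trm (lift \<circ> \<theta>) (lift t) = lift (subst_trm \<theta> t)"
  by (simp add: lift_subst)

lemma step_object:
  assumes dp: "definite_program P" and i: "i < length P" and \<rho>: "inj \<rho>"
    and rc: "rename_clause \<rho> (P ! i) = (H, B)"
    and disj: "(vars_trm H \<union> vars_goal B) \<inter> vars_goal (A # R) = {}"
    and mgu: "is_mgu \<theta> A H" and gl: "gl_rel MR R"
    and b: "b \<notin> vars_trm H \<union> vars_goal B \<union> vars_trm A \<union> vars_goal R"
  shows "\<exists>MG1. ld_step (M0 @ ce P) (Fn ClauseS [lift A, Var b] # solve (Var b) # MR) (3 + i) MG1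
           \<and> gl_rel MG1 (map (subst_trm \<theta>) (B @ R))"
proof -
  obtain Ho Bo where PI: "P ! i = (Ho, Bo)" by fastforce
  have HB: "H = ren \<rho> Ho" "B = map (ren \<rho>) Bo" using rc PI by (auto simp: rename_clause_def)
  have atB: "\<forall>A\<in>set B. is_atom A" using definite_clause[OF dp i PI] HB(2) by (auto intro: is_atom_subst)
  define E where "E = encode_body (map lift B)"
  have rcm: "rename_clause \<rho> ((M0 @ ce P) ! (3 + i)) = (Fn ClauseS [lift H, E], [])"
    unfolding MP_nth_ce using rename_ce[OF i PI, of \<rho>] HB E_def by simp
  have vE: "vars_trm E = vars_goal B" by (simp add: E_def vars_encode_body vars_goal_def)
  have vMR: "vars_goal MR = vars_goal R" using gl_rel_vars[OF gl] .
  define s where "s = Fn ClauseS [lift A, Var b]"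
  define t where "t = Fn ClauseS [lift H, E]"
  define \<sigma> where "\<sigma> = (lift \<circ> \<theta>)(b := subst_trm (lift \<circ> \<theta>) E)"
  define W where "W = vars_trm A \<union> vars_trm H \<union> vars_goal B \<union> vars_goal R \<union> {b}"
  have fW: "finite W" by (simp add: W_def)
  have bE: "b \<notin> vars_trm E" using b vE by auto
  have sA: "subst_trm \<sigma> (lift A) = lift (subst_trm \<theta> A)"
    by (rule trans[OF subst_cong subst_lift_comp]) (use b in \<open>auto simp: \<sigma>_def\<close>)
  have sH: "subst_trm \<sigma> (lift H) = lift (subst_trm \<theta> H)"
    by (rule trans[OF subst_cong subst_lift_comp]) (use b in \<open>auto simp: \<sigma>_def\<close>)
  have sE: "subst_trm \<sigma> E = subst_trm (lift \<circ> \<theta>) E"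
    by (rule subst_cong) (use bE in \<open>auto simp: \<sigma>_def\<close>)
  have uAH: "subst_trm \<theta> A = subst_trm \<theta> H" using mgu by (simp add: is_mgu_def is_unifier_def)
  have us: "is_unifier \<sigma> s t"
    by (simp add: is_unifier_def s_def t_def sA sH sE uAH) (simp add: \<sigma>_def)
  have loc: "\<exists>\<delta>. \<forall>x\<in>W. \<tau> x = subst_trm \<delta> (\<sigma> x)" if ut: "is_unifier \<tau> s t" for \<tau>
  proof -
    have u1: "subst_trm \<tau> (lift A) = subst_trm \<tau> (lift H)" and u2: "\<tau> b = subst_trm \<tau> E"
      using ut by (auto simp: is_unifier_def s_def t_def)
    obtain \<delta> where d: "\<forall>x\<in>W. \<tau> x = subst_trm \<delta> (lift (\<theta> x))"
      using mgu_lift_local[OF mgu fW u1] by blast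
    have "\<tau> x = subst_trm \<delta> (\<sigma> x)" if x: "x \<in> W" for x
    proof (cases "x = b")
      case True
      have "\<tau> b = subst_trm \<tau> E" by (rule u2)
      also have "\<dots> = subst_trm (\<lambda>y. subst_trm \<delta> (lift (\<theta> y))) E"
        by (rule subst_cong) (use d vE in \<open>auto simp: W_def\<close>)
      also have "\<dots> = subst_trm \<delta> (subst_trm (lift \<circ> \<theta>) E)" by (simp add: subst_comp)
      finally show ?thesis using True by (simp add: \<sigma>_def)
    next
      case False
      then show ?thesis using d x by (simp add: \<sigma>_def)
    qed
    then show ?thesis by blast
  qed
  have sub: "vars_trm s \<union> vars_trm t \<subseteq> W" by (auto simp: s_def t_def W_def vE)
  obtain \<theta>m where mm: "is_mgu \<theta>m s t" and agree: "\<forall>x\<in>W. \<theta>m x = \<sigma> x"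
    using mgu_local_global[OF us fW sub loc] by blast
  define MG1 where "MG1 = map (subst_trm \<theta>m) ([] @ solve (Var b) # MR)"
  have st: "ld_step (M0 @ ce P) (Fn ClauseS [lift A, Var b] # solve (Var b) # MR) (3 + i) MG1"
  proof (rule ld_stepI[OF _ \<rho> rcm])
    show "3 + i < length (M0 @ ce P)" using i by (simp add: length_M0 ce_def)
    show "(vars_trm (Fn ClauseS [lift H, E]) \<union> vars_goal []) \<inter>
      vars_goal (Fn ClauseS [lift A, Var b] # solve (Var b) # MR) = {}"
      using disj b vE vMR by auto
    show "is_mgu \<theta>m (Fn ClauseS [lift A, Var b]) (Fn ClauseS [lift H, E])"
      using mm by (simp add: s_def t_def)
  qed (simp add: MG1_def)
  have m1: "\<theta>m b = subst_trm (lift \<circ> \<theta>) E" using agree by (simp add: W_def \<sigma>_def)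
  have m2: "map (subst_trm \<theta>m) MR = map (subst_trm (lift \<circ> \<theta>)) MR"
    by (rule map_subst_cong) (use agree b vMR in \<open>auto simp: W_def \<sigma>_def\<close>)
  have MG1: "MG1 = map (subst_trm (lift \<circ> \<theta>)) (solve E # MR)"
    by (simp add: MG1_def m1 m2)
  have g0: "gl_rel (solve E # MR) (B @ R)"
    using gl_rel.GC[OF enc_body_rel[OF atB] gl] by (simp add: E_def)
  have "gl_rel (map (subst_trm (lift \<circ> \<theta>)) (solve E # MR)) (map (subst_trm (unlift \<circ> (lift \<circ> \<theta>))) (B @ R))"
    by (rule gl_rel_subst[OF g0]) simp
  moreover have "unlift \<circ> (lift \<circ> \<theta>) = \<theta>" by (simp add: o_def)
  ultimately have "gl_rel MG1 (map (subst_trm \<theta>) (B @ R))" using MG1 by simp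
  then show ?thesis using st by blast
qed



lemma sim_step:
  assumes dp: "definite_program P" and st: "ld_step P G i G1"
  shows "gl_rel MG G \<Longrightarrow> \<exists>js MG1. ld_path (M0 @ ce P) MG js MG1 \<and> js \<noteq> [] \<and> gl_rel MG1 G1"
proof (induction "wg MG" arbitrary: MG rule: less_induct)
  case less
  from st obtain A R \<rho> H B \<theta> where i: "i < length P" and G: "G = A # R" and \<rho>: "inj \<rho>"
    and rc: "rename_clause \<rho> (P ! i) = (H, B)"
    and disj: "(vars_trm H \<union> vars_goal B) \<inter> vars_goal G = {}"
    and mgu: "is_mgu \<theta> A H" and G1: "G1 = map (subst_trm \<theta>) (B @ R)"
    unfolding ld_step_def by blast
  from less.prems G obtain c As MR R' where MG: "MG = solve c # MR" and ec: "enc_rel c As"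
    and glr: "gl_rel MR R'" and AsR: "As @ R' = G"
    by (cases rule: gl_rel.cases) auto
  from ec show ?case
  proof (cases rule: enc_rel.cases)
    case ET
    have s: "ld_step (M0 @ ce P) MG 0 MR" using step_true[OF glr] MG ET by simp
    have "wg MR < wg MG" using MG ET by simp
    moreover have "gl_rel MR G" using glr AsR ET by simp
    ultimately obtain js MG1 where "ld_path (M0 @ ce P) MR js MG1" "gl_rel MG1 G1"
      using less.hyps by blast
    then show ?thesis using s ld_path.Cons by blast
  next
    case (EC a As1 b Bs1)
    obtain N where N: "\<forall>y\<in>vars_goal MG. y < N" using bounded_vars[OF finite_vars_goal] by blast
    have s: "ld_step (M0 @ ce P) MG 1 (solve a # solve b # MR)"
      using step_comma[of a b MR N P] N MG EC by simp
    have "wg (solve a # solve b # MR) < wg MG" using MG EC by simp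
    moreover have "gl_rel (solve a # solve b # MR) G"
    proof -
      have "gl_rel (solve b # MR) (Bs1 @ R')" by (rule gl_rel.GC[OF EC(4) glr])
      from gl_rel.GC[OF EC(3) this] show ?thesis using AsR EC by simp
    qed
    ultimately obtain js MG1 where "ld_path (M0 @ ce P) (solve a # solve b # MR) js MG1" "gl_rel MG1 G1"
      using less.hyps by blast
    then show ?thesis using s ld_path.Cons by blast
  next
    case (EA A0)
    have A0: "A0 = A" "R' = R" using AsR EA G by auto
    have fin: "finite (vars_goal MG \<union> vars_trm H \<union> vars_goal B)" by simp
    obtain N where N: "\<forall>y\<in>vars_goal MG \<union> vars_trm H \<union> vars_goal B. y < N"
      using bounded_vars[OF fin] by blast
    have s1: "ld_step (M0 @ ce P) MG 2 (Fn ClauseS [lift A, Var (Suc N)] # solve (Var (Suc N)) # MR)"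
      using step_solve_atom[of A MR N P] N MG EA A0 by simp
    have vMR: "vars_goal MR = vars_goal R" using gl_rel_vars[OF glr] A0 by simp
    have bfresh: "Suc N \<notin> vars_trm H \<union> vars_goal B \<union> vars_trm A \<union> vars_goal R"
    proof
      have N': "\<forall>y\<in>vars_trm H \<union> vars_goal B \<union> vars_trm A \<union> vars_goal R. y < N"
        using N MG EA A0 vMR by auto
      assume h: "Suc N \<in> vars_trm H \<union> vars_goal B \<union> vars_trm A \<union> vars_goal R"
      from N' h have "Suc N < N" by (rule bspec)
      then show False by simp
    qed
    obtain MG1 where s2: "ld_step (M0 @ ce P) (Fn ClauseS [lift A, Var (Suc N)] # solve (Var (Suc N)) # MR) (3 + i) MG1"
      and g1: "gl_rel MG1 (map (subst_trm \<theta>) (B @ R))"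
      using step_object[OF dp i \<rho> rc _ mgu _ bfresh] disj G glr A0 by auto
    have "ld_path (M0 @ ce P) MG [2, 3 + i] MG1"
      using s1 s2 by (meson ld_path.Cons ld_path.Nil)
    then show ?thesis using g1 G1 by blast
  qed
qed

lemma sim_path:
  assumes dp: "definite_program P"
  shows "ld_path P G is G' \<Longrightarrow> gl_rel MG G \<Longrightarrow> \<exists>js MG'. ld_path (M0 @ ce P) MG js MG' \<and> length is \<le> length js"
proof (induction arbitrary: MG rule: ld_path.induct)
  case (Nil G)
  then show ?case using ld_path.Nil by fastforce
next
  case (Cons G i G1 "is" G')
  obtain js MG1 where p1: "ld_path (M0 @ ce P) MG js MG1" "js \<noteq> []" "gl_rel MG1 G1"
    using sim_step[OF dp Cons.hyps(1) Cons.prems] by blast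
  obtain js' MG' where p2: "ld_path (M0 @ ce P) MG1 js' MG'" "length is \<le> length js'"
    using Cons.IH[OF p1(3)] by blast
  have "ld_path (M0 @ ce P) MG (js @ js') MG'" by (rule ld_path_append[OF p1(1) p2(1)])
  moreover have "length (i # is) \<le> length (js @ js')" using p1(2) p2(2) by (cases js) auto
  ultimately show ?case by blast
qed



lemma head_MP:
  assumes "j < length (M0 @ ce P)" "rename_clause \<rho> ((M0 @ ce P) ! j) = (H, B)"
  shows "(j < 3 \<longrightarrow> (\<exists>ts. H = Fn SolveS ts)) \<and> (\<not> j < 3 \<longrightarrow> (\<exists>k Ho Bo. j = 3 + k \<and> k < length P \<and> P ! k = (Ho, Bo) \<and>
     H = Fn ClauseS [lift (ren \<rho> Ho), encode_body (map lift (map (ren \<rho>) Bo))] \<and> B = []))"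
proof (cases "j < 3")
  case True
  then have "j = 0 \<or> j = 1 \<or> j = 2" by auto
  then have "\<exists>ts. H = Fn SolveS ts"
    using assms(2) True by (auto simp: MP_nth_M0 M0_def rename_clause_def solve_def)
  then show ?thesis using True by simp
next
  case False
  then obtain k where j: "j = 3 + k" by (metis add.commute le_Suc_ex not_less numeral_3_eq_3 add_Suc_shift add_0 Suc_eq_plus1 less_Suc_eq_le)
  have k: "k < length P" using assms(1) j by (simp add: length_M0 ce_def)
  obtain Ho Bo where PI: "P ! k = (Ho, Bo)" by fastforce
  have "rename_clause \<rho> ((M0 @ ce P) ! j) = (Fn ClauseS [lift (ren \<rho> Ho), encode_body (map lift (map (ren \<rho>) Bo))], [])"
    unfolding j MP_nth_ce by (rule rename_ce[OF k PI])
  then show ?thesis using assms(2) False j k PI by auto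
qed

lemma step_head:
  assumes "ld_step (M0 @ ce P) (Fn f ts # MR) j MG1"
  shows "(j < 3 \<longrightarrow> f = SolveS) \<and> (\<not> j < 3 \<longrightarrow> f = ClauseS)"
proof -
  from assms obtain \<rho> H B \<theta> where j: "j < length (M0 @ ce P)"
    and rc: "rename_clause \<rho> ((M0 @ ce P) ! j) = (H, B)" and mgu: "is_mgu \<theta> (Fn f ts) H"
    unfolding ld_step_def by blast
  have u: "subst_trm \<theta> (Fn f ts) = subst_trm \<theta> H" using mgu by (simp add: is_mgu_def is_unifier_def)
  show ?thesis using head_MP[OF j rc] u by auto
qed

lemma dead_end:
  assumes dp: "definite_program P" and f: "f = TrueS \<or> f = CommaS"
  shows "\<not> ld_step (M0 @ ce P) (Fn ClauseS [Fn f ts, v] # MR) j x"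
proof
  assume st: "ld_step (M0 @ ce P) (Fn ClauseS [Fn f ts, v] # MR) j x"
  then have nj: "\<not> j < 3" using step_head[OF st] by auto
  from st obtain \<rho> H B \<theta> where j: "j < length (M0 @ ce P)"
    and rc: "rename_clause \<rho> ((M0 @ ce P) ! j) = (H, B)" and mgu: "is_mgu \<theta> (Fn ClauseS [Fn f ts, v]) H"
    unfolding ld_step_def by blast
  obtain k Ho Bo where k: "k < length P" "P ! k = (Ho, Bo)"
    and H: "H = Fn ClauseS [lift (ren \<rho> Ho), encode_body (map lift (map (ren \<rho>) Bo))]"
    using head_MP[OF j rc] nj by blast
  have "is_atom Ho" using definite_clause[OF dp k] by simp
  then obtain p us where "lift (ren \<rho> Ho) = Fn (Orig p) us" by (auto simp: is_atom_def)
  moreover have "subst_trm \<theta> (Fn ClauseS [Fn f ts, v]) = subst_trm \<theta> H"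
    using mgu by (simp add: is_mgu_def is_unifier_def)
  ultimately show False using H f by auto
qed

definition K :: "'f clause list \<Rightarrow> nat" where
  "K P = sum_list (map (\<lambda>(H, B). wt (encode_body (map lift B))) P)"



lemma ren_gl:
  assumes "gl_rel MG G" "\<forall>x\<in>vars_goal MG. \<theta> x = Var (\<pi> x)"
  shows "gl_rel (map (subst_trm \<theta>) MG) (map (ren \<pi>) G)"
proof -
  have "gl_rel (map (subst_trm \<theta>) MG) (map (subst_trm (unlift \<circ> \<theta>)) G)"
    by (rule gl_rel_subst[OF assms(1)]) (use assms(2) in auto)
  moreover have "map (subst_trm (unlift \<circ> \<theta>)) G = map (ren \<pi>) G"
    by (rule map_subst_cong) (use assms gl_rel_vars[OF assms(1)] in auto)
  ultimately show ?thesis by simp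
qed

lemma vars_goal_ren_subst:
  assumes "\<forall>x\<in>vars_goal MG. \<theta> x = Var (\<pi> x)"
  shows "vars_goal (map (subst_trm \<theta>) MG) = \<pi> ` vars_goal MG"
  using assms by (auto simp: vars_goal_map_subst)

lemma enc_rel_not_var: "enc_rel c As \<Longrightarrow> \<exists>f ts. c = Fn f ts"
  by (induction rule: enc_rel.induct) (auto simp: is_atom_def)

lemma enc_rel_cases_subst:
  assumes "enc_rel c As"
  shows "c = Fn TrueS [] \<and> As = [] \<or>
         (\<exists>c1 c2 As1 As2. c = Fn CommaS [c1, c2] \<and> As = As1 @ As2 \<and> enc_rel c1 As1 \<and> enc_rel c2 As2) \<or>
         (\<exists>A0 p ts. c = lift A0 \<and> As = [A0] \<and> is_atom A0 \<and> A0 = Fn p ts)"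
  using assms by (cases rule: enc_rel.cases) (auto simp: is_atom_def)

lemma r1_step:
  assumes dp: "definite_program P" and st: "ld_step (M0 @ ce P) (solve c # MR) j MG1"
    and ec: "enc_rel c As" and gl: "gl_rel MR R"
  shows "(\<forall>j' x. \<not> ld_step (M0 @ ce P) MG1 j' x) \<or>
         (\<exists>\<pi>. Rm MG1 (map (ren \<pi>) (As @ R)) \<and> inj_on \<pi> (vars_goal (As @ R)) \<and> wg MG1 < wg (solve c # MR))"
proof -
  from st obtain \<rho> H B \<theta> where jl: "j < length (M0 @ ce P)" and \<rho>: "inj \<rho>"
    and rc: "rename_clause \<rho> ((M0 @ ce P) ! j) = (H, B)"
    and disj: "(vars_trm H \<union> vars_goal B) \<inter> vars_goal (solve c # MR) = {}"
    and mgu: "is_mgu \<theta> (solve c) H" and MG1: "MG1 = map (subst_trm \<theta>) (B @ MR)"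
    unfolding ld_step_def by blast
  have j3: "j < 3" using step_head[of P "SolveS" "[c]" MR j MG1] st by (auto simp: solve_def)
  have u: "subst_trm \<theta> (solve c) = subst_trm \<theta> H" using mgu by (simp add: is_mgu_def is_unifier_def)
  define X0 where "X0 = vars_goal (solve c # MR)"
  have vX0: "X0 = vars_goal (As @ R)"
    using enc_rel_vars[OF ec] gl_rel_vars[OF gl] by (simp add: X0_def)
  have vc: "vars_trm c \<subseteq> X0" "vars_goal MR \<subseteq> X0" by (auto simp: X0_def)
  have a_ne_b: "\<rho> 0 \<noteq> \<rho> 1" using \<rho> by (simp add: inj_eq)
  from j3 consider "j = 0" | "j = 1" | "j = 2" by linarith
  then show ?thesis
  proof cases
    case 1
    have HB: "H = solve (Fn TrueS [])" "B = []"
      using rc 1 by (simp_all add: MP_nth_M0 rename_M0_0)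
    have "subst_trm \<theta> c = Fn TrueS []" using u HB by (simp add: solve_def)
    then have c: "c = Fn TrueS []" and As: "As = []"
      using enc_rel_cases_subst[OF ec] by (auto simp: lift_def)
    have "is_unifier Var (solve c) H" using c HB by (simp add: is_unifier_def)
    then obtain \<pi> where \<pi>: "\<forall>x\<in>X0. \<theta> x = Var (\<pi> x)" and inj: "inj_on \<pi> X0"
      using mgu_renames[OF mgu, of Var X0] by auto
    have "gl_rel MG1 (map (ren \<pi>) R)"
      using ren_gl[OF gl, of \<theta> \<pi>] \<pi> vc MG1 HB by auto
    moreover have "wg MG1 < wg (solve c # MR)" using MG1 HB c wg_subst[OF gl] by simp
    ultimately have "Rm MG1 (map (ren \<pi>) (As @ R)) \<and> inj_on \<pi> (vars_goal (As @ R)) \<and> wg MG1 < wg (solve c # MR)"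
      using inj vX0 As by (simp add: Rm_def)
    then show ?thesis by blast
  next
    case 2
    define a where "a = \<rho> 0"
    define b where "b = \<rho> 1"
    have HB: "H = solve (Fn CommaS [Var a, Var b])" "B = [solve (Var a), solve (Var b)]"
      using rc 2 by (simp_all add: a_def b_def M0_def rename_clause_def solve_def)
    have ab: "a \<noteq> b" "a \<notin> X0" "b \<notin> X0" using a_ne_b disj HB by (auto simp: a_def b_def X0_def)
    have "subst_trm \<theta> c = Fn CommaS [\<theta> a, \<theta> b]" using u HB by (simp add: solve_def)
    then obtain c1 c2 As1 As2 where c: "c = Fn CommaS [c1, c2]" and As: "As = As1 @ As2"
      and e1: "enc_rel c1 As1" and e2: "enc_rel c2 As2"
      using enc_rel_cases_subst[OF ec] by (auto simp: lift_def)
    have ta: "\<theta> a = subst_trm \<theta> c1" "\<theta> b = subst_trm \<theta> c2"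
      using u HB c by (auto simp: solve_def)
    define \<sigma>0 where "\<sigma>0 = Var(a := c1, b := c2)"
    have sc: "subst_trm \<sigma>0 c = c"
      by (rule trans[OF subst_cong subst_Var]) (use ab vc in \<open>auto simp: \<sigma>0_def\<close>)
    have "is_unifier \<sigma>0 (solve c) H"
      using sc ab(1) by (simp add: is_unifier_def HB c \<sigma>0_def)
    moreover have "\<And>x. x \<in> X0 \<Longrightarrow> \<sigma>0 x = Var x" using ab by (auto simp: \<sigma>0_def)
    ultimately obtain \<pi> where \<pi>: "\<forall>x\<in>X0. \<theta> x = Var (\<pi> x)" and inj: "inj_on \<pi> X0"
      using mgu_renames[OF mgu] by blast
    have MG1': "MG1 = map (subst_trm \<theta>) (solve c1 # solve c2 # MR)"
      using MG1 HB ta by simp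
    have g0: "gl_rel (solve c1 # solve c2 # MR) (As1 @ As2 @ R)"
      using gl_rel.GC[OF e1 gl_rel.GC[OF e2 gl]] .
    have "vars_goal (solve c1 # solve c2 # MR) \<subseteq> X0" using vc c by auto
    then have "gl_rel MG1 (map (ren \<pi>) (As1 @ As2 @ R))"
      using ren_gl[OF g0, of \<theta> \<pi>] \<pi> MG1' by auto
    moreover have "wg MG1 < wg (solve c # MR)"
      using MG1' c wg_subst[OF g0, of \<theta>] by simp
    ultimately have "Rm MG1 (map (ren \<pi>) (As @ R)) \<and> inj_on \<pi> (vars_goal (As @ R)) \<and> wg MG1 < wg (solve c # MR)"
      using inj vX0 As by (simp add: Rm_def)
    then show ?thesis by blast
  next
    case 3
    define a where "a = \<rho> 0"
    define b where "b = \<rho> 1"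
    have HB: "H = solve (Var a)" "B = [Fn ClauseS [Var a, Var b], solve (Var b)]"
      using rc 3 by (simp_all add: a_def b_def M0_def rename_clause_def solve_def)
    have ab: "a \<noteq> b" "a \<notin> X0" "b \<notin> X0" using a_ne_b disj HB by (auto simp: a_def b_def X0_def)
    have ta: "\<theta> a = subst_trm \<theta> c" using u HB by (simp add: solve_def)
    define \<sigma>0 where "\<sigma>0 = Var(a := c)"
    have sc: "subst_trm \<sigma>0 c = c"
      by (rule trans[OF subst_cong subst_Var]) (use ab vc in \<open>auto simp: \<sigma>0_def\<close>)
    have u0: "is_unifier \<sigma>0 (solve c) H"
      using sc by (simp add: is_unifier_def HB \<sigma>0_def)
    have s0: "\<sigma>0 x = Var x" if x: "x \<in> insert b X0" for x
    proof -
      have "x \<noteq> a" using x ab by blast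
      then show ?thesis by (simp add: \<sigma>0_def)
    qed
    have "\<exists>\<pi>. (\<forall>x\<in>insert b X0. \<theta> x = Var (\<pi> x)) \<and> inj_on \<pi> (insert b X0)"
      by (rule mgu_renames[OF mgu u0 s0])
    then obtain \<pi> where \<pi>: "\<forall>x\<in>insert b X0. \<theta> x = Var (\<pi> x)" and inj: "inj_on \<pi> (insert b X0)"
      by blast
    have MG1': "MG1 = Fn ClauseS [subst_trm \<theta> c, Var (\<pi> b)] # solve (Var (\<pi> b)) # map (subst_trm \<theta>) MR"
      using MG1 HB ta \<pi> by simp
    from enc_rel_cases_subst[OF ec] show ?thesis
    proof (elim disjE exE conjE)
      assume c: "c = Fn TrueS []"
      have "\<not> ld_step (M0 @ ce P) MG1 j' x" for j' x
        unfolding MG1' c subst_trm.simps list.map by (rule dead_end[OF dp]) simp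
      then show ?thesis by blast
    next
      fix c1 c2 As1 As2 assume c: "c = Fn CommaS [c1, c2]"
      have "\<not> ld_step (M0 @ ce P) MG1 j' x" for j' x
        unfolding MG1' c subst_trm.simps list.map by (rule dead_end[OF dp]) simp
      then show ?thesis by blast
    next
      fix A0 p ts assume c: "c = lift A0" and As: "As = [A0]" and at: "is_atom A0"
      have vA0: "vars_trm A0 \<subseteq> X0" using vc c by simp
      have sA: "subst_trm \<theta> (lift A0) = lift (ren \<pi> A0)"
      proof -
        have "subst_trm \<theta> (lift A0) = subst_trm (Var \<circ> \<pi>) (lift A0)"
          by (rule subst_cong) (use \<pi> vA0 in auto)
        then show ?thesis by (simp add: ren_lift)
      qed
      have glm: "gl_rel (map (subst_trm \<theta>) MR) (map (ren \<pi>) R)"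
        using ren_gl[OF gl, of \<theta> \<pi>] \<pi> vc by auto
      have vm: "vars_goal (map (subst_trm \<theta>) MR) = \<pi> ` vars_goal MR"
        by (rule vars_goal_ren_subst) (use \<pi> vc in auto)
      have pb1: "\<pi> b \<notin> vars_trm (ren \<pi> A0)"
      proof -
        have "\<pi> b \<notin> \<pi> ` vars_trm A0"
          using inj_on_image_mem_iff[OF inj, of b "vars_trm A0"] ab vA0 by blast
        then show ?thesis by (simp add: vars_ren)
      qed
      have pb2: "\<pi> b \<notin> vars_goal (map (subst_trm \<theta>) MR)"
      proof -
        have "\<pi> b \<notin> \<pi> ` vars_goal MR"
          using inj_on_image_mem_iff[OF inj, of b "vars_goal MR"] ab vc by blast
        then show ?thesis using vm by simp
      qed
      have "Rm MG1 (ren \<pi> A0 # map (ren \<pi>) R)"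
        unfolding Rm_def using MG1' c sA glm pb1 pb2 is_atom_subst[OF at] by blast
      moreover have "wg MG1 < wg (solve c # MR)"
        using MG1' c wg_subst[OF gl, of \<theta>] at by (auto simp: solve_def is_atom_def)
      moreover have "inj_on \<pi> (vars_goal (As @ R))" using inj vX0 by (auto intro: inj_on_subset)
      ultimately have "Rm MG1 (map (ren \<pi>) (As @ R)) \<and> inj_on \<pi> (vars_goal (As @ R)) \<and> wg MG1 < wg (solve c # MR)"
        using As by simp
      then show ?thesis by blast
    qed
  qed
qed



lemma lift_unifier:
  assumes u: "subst_trm \<tau> A = subst_trm \<tau> H" and bA: "b \<notin> vars_trm A" and bH: "b \<notin> vars_trm H"
    and bE: "b \<notin> vars_trm E"
  shows "is_unifier ((lift \<circ> \<tau>)(b := subst_trm (lift \<circ> \<tau>) E)) (Fn ClauseS [lift A, Var b]) (Fn ClauseS [lift H, E])"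
proof -
  let ?t = "(lift \<circ> \<tau>)(b := subst_trm (lift \<circ> \<tau>) E)"
  have sA: "subst_trm ?t (lift A) = lift (subst_trm \<tau> A)"
    by (rule trans[OF subst_cong subst_lift_comp]) (use bA in auto)
  have sH: "subst_trm ?t (lift H) = lift (subst_trm \<tau> H)"
    by (rule trans[OF subst_cong subst_lift_comp]) (use bH in auto)
  have sE: "subst_trm ?t E = subst_trm (lift \<circ> \<tau>) E"
    by (rule subst_cong) (use bE in auto)
  show ?thesis by (simp add: is_unifier_def sA sH sE u)
qed

lemma r2_step:
  assumes dp: "definite_program P"
    and st: "ld_step (M0 @ ce P) (Fn ClauseS [lift A, Var b] # solve (Var b) # MR) j MG1"
    and gl: "gl_rel MR R" and bA: "b \<notin> vars_trm A" and bR: "b \<notin> vars_goal MR"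
  shows "\<exists>i G1. ld_step P (A # R) i G1 \<and> Rm MG1 G1 \<and>
            wg MG1 \<le> wg (Fn ClauseS [lift A, Var b] # solve (Var b) # MR) + K P"
proof -
  from st obtain \<rho> H' B' \<theta> where jl: "j < length (M0 @ ce P)" and \<rho>: "inj \<rho>"
    and rc: "rename_clause \<rho> ((M0 @ ce P) ! j) = (H', B')"
    and disj: "(vars_trm H' \<union> vars_goal B') \<inter> vars_goal (Fn ClauseS [lift A, Var b] # solve (Var b) # MR) = {}"
    and mgu: "is_mgu \<theta> (Fn ClauseS [lift A, Var b]) H'"
    and MG1: "MG1 = map (subst_trm \<theta>) (B' @ solve (Var b) # MR)"
    unfolding ld_step_def by blast
  have nj: "\<not> j < 3" using step_head[OF st] by auto
  obtain k Ho Bo where j: "j = 3 + k" and k: "k < length P" and PI: "P ! k = (Ho, Bo)"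
    and H': "H' = Fn ClauseS [lift (ren \<rho> Ho), encode_body (map lift (map (ren \<rho>) Bo))]" and B': "B' = []"
    using head_MP[OF jl rc] nj by blast
  define H where "H = ren \<rho> Ho"
  define Bs where "Bs = map (ren \<rho>) Bo"
  define E where "E = encode_body (map lift Bs)"
  have H'': "H' = Fn ClauseS [lift H, E]" using H' by (simp add: H_def Bs_def E_def)
  have vE: "vars_trm E = vars_goal Bs" by (simp add: E_def vars_encode_body vars_goal_def)
  have vMR: "vars_goal MR = vars_goal R" using gl_rel_vars[OF gl] .
  have atBo: "\<forall>A\<in>set Bo. is_atom A" using definite_clause[OF dp k PI] by simp
  have atBs: "\<forall>A\<in>set Bs. is_atom A" using atBo by (auto simp: Bs_def intro: is_atom_subst)
  have disj2: "(vars_trm H \<union> vars_goal Bs) \<inter> (insert b (vars_trm A \<union> vars_goal MR)) = {}"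
    using disj H'' vE by auto
  have bH: "b \<notin> vars_trm H" and bE: "b \<notin> vars_trm E" using disj2 vE by auto
  have u: "subst_trm \<theta> (lift A) = subst_trm \<theta> (lift H)" and tb: "\<theta> b = subst_trm \<theta> E"
    using mgu H'' by (auto simp: is_mgu_def is_unifier_def)
  define W where "W = vars_trm A \<union> vars_trm H \<union> vars_goal Bs \<union> vars_goal R"
  have fW: "finite W" by (simp add: W_def)
  have bW: "b \<notin> W" using bA bH bE vE bR vMR by (auto simp: W_def)
  have uo: "subst_trm (unlift \<circ> \<theta>) A = subst_trm (unlift \<circ> \<theta>) H"
    using arg_cong[OF u, of unlift] by (simp add: unlift_subst)
  have mu: "\<exists>\<delta>. \<forall>x. (if x = b then subst_trm (lift \<circ> \<tau>) E else lift (\<tau> x)) = subst_trm \<delta> (\<theta> x)"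
    if ut: "subst_trm \<tau> A = subst_trm \<tau> H" for \<tau>
  proof -
    have "is_unifier ((lift \<circ> \<tau>)(b := subst_trm (lift \<circ> \<tau>) E)) (Fn ClauseS [lift A, Var b]) H'"
      using lift_unifier[OF ut bA bH bE] H'' by simp
    then obtain \<delta> where d: "\<forall>x. ((lift \<circ> \<tau>)(b := subst_trm (lift \<circ> \<tau>) E)) x = subst_trm \<delta> (\<theta> x)"
      using mgu unfolding is_mgu_def by blast
    have "(if x = b then subst_trm (lift \<circ> \<tau>) E else lift (\<tau> x)) = subst_trm \<delta> (\<theta> x)" for x
      using d[rule_format, of x] by (cases "x = b") auto
    then show ?thesis by blast
  qed
  have loc: "\<exists>\<delta>. \<forall>x\<in>W. \<tau> x = subst_trm \<delta> ((unlift \<circ> \<theta>) x)" if ut: "is_unifier \<tau> A H" for \<tau>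
  proof -
    obtain \<delta> where d: "\<forall>x. (if x = b then subst_trm (lift \<circ> \<tau>) E else lift (\<tau> x)) = subst_trm \<delta> (\<theta> x)"
      using mu ut by (auto simp: is_unifier_def)
    have "\<tau> x = subst_trm (unlift \<circ> \<delta>) ((unlift \<circ> \<theta>) x)" if x: "x \<in> W" for x
    proof -
      have "x \<noteq> b" using x bW by blast
      then have "lift (\<tau> x) = subst_trm \<delta> (\<theta> x)" using d by metis
      then have "unlift (lift (\<tau> x)) = unlift (subst_trm \<delta> (\<theta> x))" by simp
      then show ?thesis by (simp add: unlift_subst)
    qed
    then show ?thesis by blast
  qed
  have sub: "vars_trm A \<union> vars_trm H \<subseteq> W" by (auto simp: W_def)
  have uo': "is_unifier (unlift \<circ> \<theta>) A H" using uo by (simp add: is_unifier_def)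
  obtain \<theta>0 where m0: "is_mgu \<theta>0 A H" and ag: "\<forall>x\<in>W. \<theta>0 x = (unlift \<circ> \<theta>) x"
    using mgu_local_global[OF uo' fW sub loc] by blast
  define G1 where "G1 = map (subst_trm \<theta>0) (Bs @ R)"
  have ost: "ld_step P (A # R) k G1"
  proof (rule ld_stepI[OF k \<rho>])
    show "rename_clause \<rho> (P ! k) = (H, Bs)" using PI by (simp add: rename_clause_def H_def Bs_def)
    show "(vars_trm H \<union> vars_goal Bs) \<inter> vars_goal (A # R) = {}" using disj2 vMR by auto
  qed (auto simp: m0 G1_def)
  have G1': "G1 = map (subst_trm (unlift \<circ> \<theta>)) (Bs @ R)"
    unfolding G1_def by (rule map_subst_cong) (use ag in \<open>auto simp: W_def\<close>)
  obtain \<delta>0 where d0: "\<forall>x. (if x = b then subst_trm (lift \<circ> (unlift \<circ> \<theta>)) E else lift ((unlift \<circ> \<theta>) x)) = subst_trm \<delta>0 (\<theta> x)"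
    using mu[OF uo] by blast
  have aO: "allO (\<theta> x)" if "x \<noteq> b" for x
  proof -
    have "allO (subst_trm \<delta>0 (\<theta> x))" using d0 that by (metis allO_lift)
    then show ?thesis by (rule allO_subst_inv)
  qed
  have MG1': "MG1 = map (subst_trm \<theta>) (solve E # MR)" using MG1 B' tb by simp
  have g0: "gl_rel (solve E # MR) (Bs @ R)"
    using gl_rel.GC[OF enc_body_rel[OF atBs] gl] by (simp add: E_def)
  have "gl_rel (map (subst_trm \<theta>) (solve E # MR)) (map (subst_trm (unlift \<circ> \<theta>)) (Bs @ R))"
  proof (rule gl_rel_subst[OF g0])
    fix x assume "x \<in> vars_goal (solve E # MR)"
    then have "x \<noteq> b" using bE bR by auto
    then show "allO (\<theta> x)" by (rule aO)
  qed
  then have rm: "Rm MG1 G1" using MG1' G1' by (simp add: Rm_def)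
  have E0: "E = subst_trm (Var \<circ> \<rho>) (encode_body (map lift Bo))"
    by (simp add: E_def Bs_def subst_encode_body lift_ren o_def)
  have wE: "wt E = wt (encode_body (map lift Bo))"
    unfolding E0 by (rule wt_subst[OF enc_body_rel[OF atBo]])
  have "wt (encode_body (map lift Bo)) = map (\<lambda>(H, B). wt (encode_body (map lift B))) P ! k"
    using k PI by simp
  also have "\<dots> \<le> K P" unfolding K_def by (rule elem_le_sum_list) (simp add: k)
  finally have wK: "wt E \<le> K P" using wE by simp
  have "wg MG1 = wt E + wg MR"
    using MG1' wg_subst[OF g0, of \<theta>] wt_subst[OF enc_body_rel[OF atBs], of \<theta>] by (simp add: E_def)
  then have "wg MG1 \<le> wg (Fn ClauseS [lift A, Var b] # solve (Var b) # MR) + K P"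
    using wK by simp
  then show ?thesis using ost rm by blast
qed



lemma no_step_Nil: "\<not> ld_step Q [] j x"
  by (simp add: ld_step_def)

lemma meta_path:
  assumes dp: "definite_program P"
  shows "ld_path (M0 @ ce P) MG js MG' \<Longrightarrow> Rm MG G \<Longrightarrow>
    \<exists>is G'. ld_path P G is G' \<and> length js \<le> 1 + wg MG + (K P + 1) * length is"
proof (induction arbitrary: G rule: ld_path.induct)
  case (Nil MG)
  then show ?case using ld_path.Nil by fastforce
next
  case (Cons MG j MG1 js MG')
  from Cons.prems show ?case unfolding Rm_def
  proof (elim disjE exE conjE)
    assume gl: "gl_rel MG G"
    then show ?case
    proof (cases rule: gl_rel.cases)
      case GN
      then show ?thesis using Cons.hyps(1) no_step_Nil by blast
    next
      case (GC c As MR R)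
      have st: "ld_step (M0 @ ce P) (solve c # MR) j MG1" using Cons.hyps(1) GC by simp
      from r1_step[OF dp st GC(3) GC(4)] show ?thesis
      proof (elim disjE exE conjE)
        assume dead: "\<forall>j' x. \<not> ld_step (M0 @ ce P) MG1 j' x"
        have "js = []" using Cons.hyps(2) dead by (cases rule: ld_path.cases) auto
        then show ?thesis using ld_path.Nil by fastforce
      next
        fix \<pi> assume rm: "Rm MG1 (map (ren \<pi>) (As @ R))" and inj: "inj_on \<pi> (vars_goal (As @ R))"
          and w: "wg MG1 < wg (solve c # MR)"
        obtain "is" G'' where p: "ld_path P (map (ren \<pi>) (As @ R)) is G''"
          and l: "length js \<le> 1 + wg MG1 + (K P + 1) * length is"
          using Cons.IH[OF rm] by blast
        obtain \<kappa> where \<kappa>: "bij \<kappa>" "\<forall>x\<in>vars_goal (As @ R). \<kappa> x = \<pi> x"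
          using inj_extend_bij[OF finite_vars_goal inj] by blast
        have "map (ren \<pi>) (As @ R) = map (ren \<kappa>) (As @ R)"
          by (rule map_subst_cong) (use \<kappa>(2) in auto)
        then obtain G3 where "ld_path P (As @ R) is G3"
          using ld_path_variant_back[OF \<kappa>(1)] p by metis
        moreover have "length (j # js) \<le> 1 + wg MG + (K P + 1) * length is"
          using l w GC by simp
        ultimately show ?thesis using GC by blast
      qed
    qed
  next
    fix A b MR R
    assume MG: "MG = Fn ClauseS [lift A, Var b] # solve (Var b) # MR" and G: "G = A # R"
      and gl: "gl_rel MR R" and at: "is_atom A" and bA: "b \<notin> vars_trm A" and bR: "b \<notin> vars_goal MR"
    have st: "ld_step (M0 @ ce P) (Fn ClauseS [lift A, Var b] # solve (Var b) # MR) j MG1"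
      using Cons.hyps(1) MG by simp
    obtain i G1 where os: "ld_step P (A # R) i G1" and rm: "Rm MG1 G1"
      and w: "wg MG1 \<le> wg MG + K P"
      using r2_step[OF dp st gl bA bR] MG by blast
    obtain "is" G'' where p: "ld_path P G1 is G''"
      and l: "length js \<le> 1 + wg MG1 + (K P + 1) * length is"
      using Cons.IH[OF rm] by blast
    have "ld_path P G (i # is) G''" using ld_path.Cons[OF os p] G by simp
    moreover have "length (j # js) \<le> 1 + wg MG + (K P + 1) * length (i # is)"
      using l w by simp
    ultimately show ?thesis by blast
  qed
qed

theorem mainTheorem3:
  fixes P :: "'f clause list" and Q0 :: "'f trm"
  assumes "definite_program P"
    and "is_atom Q0"
  shows "ld_tree_finite P [Q0] \<longleftrightarrow> ld_tree_finite (M0 @ ce P) [solve (lift Q0)]"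
proof -
  have g0: "gl_rel [solve (lift Q0)] [Q0]"
    using gl_rel.GC[OF enc_rel.EA[OF assms(2)] gl_rel.GN] by simp
  show ?thesis
  proof
    assume "ld_tree_finite P [Q0]"
    then obtain d where d: "\<And>is G'. ld_path P [Q0] is G' \<Longrightarrow> length is \<le> d"
      unfolding finite_iff_bounded by blast
    have "length js \<le> 1 + wg [solve (lift Q0)] + (K P + 1) * d"
      if p0: "ld_path (M0 @ ce P) [solve (lift Q0)] js MG'" for js MG'
    proof -
      obtain "is" G' where p: "ld_path P [Q0] is G'"
        and l: "length js \<le> 1 + wg [solve (lift Q0)] + (K P + 1) * length is"
        using meta_path[OF assms(1) p0, of "[Q0]"] g0 unfolding Rm_def by blast
      have "(K P + 1) * length is \<le> (K P + 1) * d" using d[OF p] by (rule mult_le_mono2)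
      then show ?thesis using l by linarith
    qed
    then show "ld_tree_finite (M0 @ ce P) [solve (lift Q0)]"
      unfolding finite_iff_bounded by blast
  next
    assume "ld_tree_finite (M0 @ ce P) [solve (lift Q0)]"
    then obtain d where d: "\<And>js MG'. ld_path (M0 @ ce P) [solve (lift Q0)] js MG' \<Longrightarrow> length js \<le> d"
      unfolding finite_iff_bounded by blast
    have "length is \<le> d" if p0: "ld_path P [Q0] is G'" for "is" G'
    proof -
      obtain js MG' where "ld_path (M0 @ ce P) [solve (lift Q0)] js MG'" "length is \<le> length js"
        using sim_path[OF assms(1) p0 g0] by blast
      then show ?thesis using d by fastforce
    qed
    then show "ld_tree_finite P [Q0]"
      unfolding finite_iff_bounded by blast
  qed
qed

end
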